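(* Let $P$ be a convex polygon with no two edges parallel. Let $Q=A_0A_1A_2A_3$ be an LMAP in $P$ with $A_0,A_1,A_2,A_3$ in clockwise order, and suppose $A_3$ lies in edge $e_i$ and $A_1$ lies in edge $e_j$, where $e_i\prec e_j$. Then $A_0$ lies on a vertex of $P$.
   Context: $P$ is a compact convex polygon with edges $e_1,\ldots,e_n$ in clockwise order and vertices $v_1,\ldots,v_n$, $e_i$ being the open segment (excluding endpoints) from $v_i$ to $v_{i+1}$ (indices mod $n$); "lies in $e_i$" means lies in this open segment. $\ell_i$ is the line containing $e_i$, $\mathsf{I}_{i,j}=\ell_i\cap\ell_j$. For distinct edges, $e_i\prec e_j$ means $\mathsf{I}_{i,j}=v_i+t(v_{i+1}-v_i)$ for some $t\ge1$ (equivalently the clockwise turning angle from direction $v_{i+1}-v_i$ to $v_{j+1}-v_j$ is in $(0,\pi)$). A parallelogram lies in $P$ if its corners lie in $P$. A parallelogram $A_0A_1A_2A_3$ lying in $P$ is locally maximal if there is $\delta>0$ such that every parallelogram $B_0B_1B_2B_3$ lying in $P$ with $|A_iB_i|<\delta$ for all $i$ has area at most that of $A_0A_1A_2A_3$; it is slidable if two corners lie in the same open edge of $P$. An LMAP is a locally maximal non-slidable parallelogram lying in $P$. *)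

theory Defs
  imports "HOL-Analysis.Analysis"
begin

type_synonym pt = "real^2"

definition cross :: "pt \<Rightarrow> pt \<Rightarrow> real" where
  "cross a b = a$1 * b$2 - a$2 * b$1"

text \<open>A compact convex polygon given by its n vertices v 0, ..., v (n-1) (indices mod n)
  in clockwise order: every other vertex lies strictly to the right of each directed edge.\<close>
definition nxt :: "nat \<Rightarrow> nat \<Rightarrow> nat" where
  "nxt n i = Suc i mod n"

definition convex_polygon_cw :: "nat \<Rightarrow> (nat \<Rightarrow> pt) \<Rightarrow> bool" where
  "convex_polygon_cw n v \<longleftrightarrow> n \<ge> 3 \<and>
     (\<forall>i<n. \<forall>k<n. k \<noteq> i \<and> k \<noteq> nxt n i \<longrightarrow>
        cross (v (nxt n i) - v i) (v k - v i) < 0)"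

definition polygon :: "nat \<Rightarrow> (nat \<Rightarrow> pt) \<Rightarrow> pt set" where
  "polygon n v = convex hull (v ` {..<n})"

definition edge :: "nat \<Rightarrow> (nat \<Rightarrow> pt) \<Rightarrow> nat \<Rightarrow> pt set" where
  "edge n v i = open_segment (v i) (v (nxt n i))"

definition no_parallel_edges :: "nat \<Rightarrow> (nat \<Rightarrow> pt) \<Rightarrow> bool" where
  "no_parallel_edges n v \<longleftrightarrow> (\<forall>i<n. \<forall>j<n. i \<noteq> j \<longrightarrow>
      cross (v (nxt n i) - v i) (v (nxt n j) - v j) \<noteq> 0)"

text \<open>e_i \<prec> e_j: the intersection of lines l_i and l_j is v_i + t (v_{i+1} - v_i) with t \<ge> 1.\<close>
definition edge_prec :: "nat \<Rightarrow> (nat \<Rightarrow> pt) \<Rightarrow> nat \<Rightarrow> nat \<Rightarrow> bool" where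
  "edge_prec n v i j \<longleftrightarrow> i \<noteq> j \<and>
     (\<exists>t s. t \<ge> 1 \<and> v i + t *\<^sub>R (v (nxt n i) - v i) = v j + s *\<^sub>R (v (nxt n j) - v j))"

definition is_parallelogram :: "pt \<Rightarrow> pt \<Rightarrow> pt \<Rightarrow> pt \<Rightarrow> bool" where
  "is_parallelogram A0 A1 A2 A3 \<longleftrightarrow> A0 + A2 = A1 + A3"

definition para_area :: "pt \<Rightarrow> pt \<Rightarrow> pt \<Rightarrow> pt \<Rightarrow> real" where
  "para_area A0 A1 A2 A3 = \<bar>cross (A1 - A0) (A3 - A0)\<bar>"

definition para_in :: "pt set \<Rightarrow> pt \<Rightarrow> pt \<Rightarrow> pt \<Rightarrow> pt \<Rightarrow> bool" where
  "para_in P A0 A1 A2 A3 \<longleftrightarrow> is_parallelogram A0 A1 A2 A3 \<and>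
     A0 \<in> P \<and> A1 \<in> P \<and> A2 \<in> P \<and> A3 \<in> P"

definition locally_maximal :: "pt set \<Rightarrow> pt \<Rightarrow> pt \<Rightarrow> pt \<Rightarrow> pt \<Rightarrow> bool" where
  "locally_maximal P A0 A1 A2 A3 \<longleftrightarrow> para_in P A0 A1 A2 A3 \<and>
     (\<exists>\<delta>>0. \<forall>B0 B1 B2 B3. para_in P B0 B1 B2 B3 \<and>
        dist A0 B0 < \<delta> \<and> dist A1 B1 < \<delta> \<and> dist A2 B2 < \<delta> \<and> dist A3 B3 < \<delta> \<longrightarrow>
        para_area B0 B1 B2 B3 \<le> para_area A0 A1 A2 A3)"

definition slidable :: "nat \<Rightarrow> (nat \<Rightarrow> pt) \<Rightarrow> pt \<Rightarrow> pt \<Rightarrow> pt \<Rightarrow> pt \<Rightarrow> bool" where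
  "slidable n v A0 A1 A2 A3 \<longleftrightarrow>
     (let A = (\<lambda>k::nat. [A0, A1, A2, A3] ! k) in
      \<exists>i<n. \<exists>a<4. \<exists>b<4. a \<noteq> b \<and> A a \<in> edge n v i \<and> A b \<in> edge n v i)"

definition LMAP :: "nat \<Rightarrow> (nat \<Rightarrow> pt) \<Rightarrow> pt \<Rightarrow> pt \<Rightarrow> pt \<Rightarrow> pt \<Rightarrow> bool" where
  "LMAP n v A0 A1 A2 A3 \<longleftrightarrow> locally_maximal (polygon n v) A0 A1 A2 A3 \<and>
     \<not> slidable n v A0 A1 A2 A3"

text \<open>A0 A1 A2 A3 in clockwise order (negative orientation, y-axis up).\<close>
definition clockwise4 :: "pt \<Rightarrow> pt \<Rightarrow> pt \<Rightarrow> pt \<Rightarrow> bool" where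
  "clockwise4 A0 A1 A2 A3 \<longleftrightarrow> cross (A1 - A0) (A2 - A1) < 0 \<and> cross (A2 - A1) (A3 - A2) < 0 \<and>
     cross (A3 - A2) (A0 - A3) < 0 \<and> cross (A0 - A3) (A1 - A0) < 0"

end

theory Submission imports Defs begin

lemma cross_lin: "cross d (u *\<^sub>R x + w *\<^sub>R y - p) = u * cross d (x - p) + w * cross d (y - p)"
  if "u + w = 1" for d x y p :: pt
proof -
  have "w = 1 - u" using that by simp
  show ?thesis unfolding cross_def \<open>w = 1 - u\<close> by (simp add: algebra_simps)
qed

lemma cross_anti: "cross a b = - cross b a" unfolding cross_def by simp

lemma halfplane:
  assumes cp: "convex_polygon_cw n v" and j: "j < n" and x: "x \<in> polygon n v"
  shows "cross (v (nxt n j) - v j) (x - v j) \<le> 0 \<and>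
     (cross (v (nxt n j) - v j) (x - v j) = 0 \<longrightarrow> x \<in> closed_segment (v j) (v (nxt n j)))"
proof -
  define d where "d = v (nxt n j) - v j"
  define T where "T = {y. cross d (y - v j) < 0} \<union> closed_segment (v j) (v (nxt n j))"
  have seg0: "cross d (y - v j) = 0" if ys: "y \<in> closed_segment (v j) (v (nxt n j))" for y
  proof -
    obtain u where yu: "y = (1 - u) *\<^sub>R v j + u *\<^sub>R v (nxt n j)" using ys unfolding in_segment by blast
    show ?thesis unfolding yu d_def cross_def by (simp add: algebra_simps)
  qed
  have cT: "convex T"
    unfolding convex_def
  proof (intro ballI allI impI)
    fix y z :: pt and u w :: real
    assume y: "y \<in> T" and z: "z \<in> T" and h: "0 \<le> u" "0 \<le> w" "u + w = 1"
    have e: "cross d (u *\<^sub>R y + w *\<^sub>R z - v j) = u * cross d (y - v j) + w * cross d (z - v j)"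
      by (rule cross_lin[OF h(3)])
    show "u *\<^sub>R y + w *\<^sub>R z \<in> T"
    proof (cases "y \<in> closed_segment (v j) (v (nxt n j)) \<and> z \<in> closed_segment (v j) (v (nxt n j))")
      case True
      then have "u *\<^sub>R y + w *\<^sub>R z \<in> closed_segment (v j) (v (nxt n j))"
        using convexD[OF convex_closed_segment] h by blast
      then show ?thesis unfolding T_def by blast
    next
      case False
      have fy: "cross d (y - v j) \<le> 0" using y seg0[of y] unfolding T_def by fastforce
      have fz: "cross d (z - v j) \<le> 0" using z seg0[of z] unfolding T_def by fastforce
      show ?thesis
      proof (cases "u = 0 \<or> w = 0")
        case True
        then have "u *\<^sub>R y + w *\<^sub>R z = y \<or> u *\<^sub>R y + w *\<^sub>R z = z" using h by auto
        then show ?thesis using y z by metis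
      next
        case F2: False
        from False have "cross d (y - v j) < 0 \<or> cross d (z - v j) < 0" using y z unfolding T_def by auto
        moreover have "u * cross d (y - v j) \<le> 0" using h fy by (simp add: mult_nonneg_nonpos)
        moreover have "w * cross d (z - v j) \<le> 0" using h fz by (simp add: mult_nonneg_nonpos)
        moreover have "u > 0" "w > 0" using F2 h by auto
        ultimately have "u * cross d (y - v j) + w * cross d (z - v j) < 0"
          by (smt (verit) mult_pos_neg)
        then show ?thesis using e unfolding T_def by auto
      qed
    qed
  qed
  have n3: "n \<ge> 3" using cp unfolding convex_polygon_cw_def by simp
  have vT: "v ` {..<n} \<subseteq> T"
  proof
    fix y assume "y \<in> v ` {..<n}"
    then obtain k where k: "k < n" "y = v k" by auto
    show "y \<in> T"
    proof (cases "k = j \<or> k = nxt n j")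
      case True then show ?thesis unfolding T_def using k by auto
    next
      case False
      have "cross (v (nxt n j) - v j) (v k - v j) < 0" using cp k j False unfolding convex_polygon_cw_def by blast
      then show ?thesis unfolding T_def d_def k(2) by blast
    qed
  qed
  have "polygon n v \<subseteq> T" unfolding polygon_def using hull_minimal[of _ T convex] vT cT by blast
  then have "x \<in> T" using x by blast
  then have "cross d (x - v j) < 0 \<or> x \<in> closed_segment (v j) (v (nxt n j))" unfolding T_def by blast
  then show ?thesis using seg0 unfolding d_def by fastforce
qed

lemma seg_move:
  assumes "x \<in> open_segment a b"
  shows "\<exists>r>0. \<forall>\<mu>. \<bar>\<mu>\<bar> < r \<longrightarrow> x + \<mu> *\<^sub>R (b - a) \<in> closed_segment a b"
proof -
  obtain u where u: "0 < u" "u < 1" "x = (1 - u) *\<^sub>R a + u *\<^sub>R b" using assms in_segment by blast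
  show ?thesis
  proof (intro exI[of _ "min u (1 - u)"] conjI allI impI)
    show "0 < min u (1 - u)" using u by simp
    fix \<mu> :: real assume "\<bar>\<mu>\<bar> < min u (1 - u)"
    then have "0 \<le> u + \<mu>" "u + \<mu> \<le> 1" by auto
    moreover have "x + \<mu> *\<^sub>R (b - a) = (1 - (u + \<mu>)) *\<^sub>R a + (u + \<mu>) *\<^sub>R b"
      using u by (simp add: algebra_simps)
    ultimately show "x + \<mu> *\<^sub>R (b - a) \<in> closed_segment a b" unfolding in_segment by blast
  qed
qed

lemma small: "(r::real) > 0 \<Longrightarrow> \<exists>\<rho>>0. \<forall>l. \<bar>l\<bar> < \<rho> \<longrightarrow> \<bar>l * c\<bar> < r"
proof (intro exI[of _ "r / (\<bar>c\<bar> + 1)"] conjI allI impI)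
  assume r: "r > 0"
  show "0 < r / (\<bar>c\<bar> + 1)" using r by simp
  fix l :: real assume l: "\<bar>l\<bar> < r / (\<bar>c\<bar> + 1)"
  have "\<bar>l * c\<bar> = \<bar>l\<bar> * \<bar>c\<bar>" by (simp add: abs_mult)
  also have "\<dots> \<le> \<bar>l\<bar> * (\<bar>c\<bar> + 1)" by (simp add: mult_left_mono)
  also have "\<dots> < r" using l by (simp add: field_simps)
  finally show "\<bar>l * c\<bar> < r" .
qed

lemma choose:
  assumes "L \<noteq> 0 \<or> M < (0::real)" and "\<rho> > 0"
  shows "\<exists>l. \<bar>l\<bar> < \<rho> \<and> l * L - l^2 * M > 0"
proof (cases "L = 0")
  case True
  then have M: "M < 0" using assms by simp
  have "(\<rho>/2)^2 * M < 0" using M assms(2) by (simp add: mult_pos_neg)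
  then show ?thesis using True assms(2) by (intro exI[of _ "\<rho>/2"]) auto
next
  case False
  define \<mu> where "\<mu> = min (\<rho>/2) (\<bar>L\<bar> / (2 * (\<bar>M\<bar> + 1)))"
  have mu: "\<mu> > 0" "\<mu> < \<rho>" "\<mu> \<le> \<bar>L\<bar> / (2 * (\<bar>M\<bar> + 1))" using False assms(2) unfolding \<mu>_def by auto
  have "\<mu> * (\<bar>M\<bar> + 1) \<le> \<bar>L\<bar> / 2" using mu(3) by (simp add: field_simps)
  then have "\<mu> * \<bar>M\<bar> + \<mu> \<le> \<bar>L\<bar> / 2" by (simp add: algebra_simps)
  then have mm: "\<mu> * \<bar>M\<bar> < \<bar>L\<bar>" using False mu(1) by linarith
  define l where "l = sgn L * \<mu>"
  have "l * L = \<mu> * \<bar>L\<bar>" unfolding l_def by (simp add: abs_sgn mult.commute mult.left_commute sgn_mult_abs)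
  moreover have "l^2 * M \<le> \<mu>^2 * \<bar>M\<bar>"
  proof -
    have "l^2 = \<mu>^2" unfolding l_def using False by (simp add: power_mult_distrib sgn_if)
    moreover have "\<mu>^2 * M \<le> \<mu>^2 * \<bar>M\<bar>" by (rule mult_left_mono) auto
    ultimately show ?thesis by simp
  qed
  moreover have "\<mu>^2 * \<bar>M\<bar> < \<mu> * \<bar>L\<bar>" using mm mu(1) by (simp add: power2_eq_square)
  moreover have "\<bar>l\<bar> < \<rho>" unfolding l_def using False mu by (simp add: abs_mult)
  ultimately show ?thesis by (intro exI[of _ l]) auto
qed


lemma cross_bilin: "cross (a - s *\<^sub>R c) (b - t *\<^sub>R d) =
    cross a b - t * cross a d - s * cross c b + s * t * cross c d"
  unfolding cross_def by (simp add: algebra_simps)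

lemma slid_lemma:
  assumes "k < n" "x \<in> edge n v k" "y \<in> edge n v k" "a < 4" "b < 4" "a \<noteq> b"
    "[A0, A1, A2, A3] ! a = x" "[A0, A1, A2, A3] ! b = y"
  shows "slidable n v A0 A1 A2 A3"
  unfolding slidable_def Let_def using assms by blast

theorem lemma10:
  fixes n :: nat and v :: "nat \<Rightarrow> real^2" and A0 A1 A2 A3 :: "real^2" and i j :: nat
  assumes "convex_polygon_cw n v"
    and "no_parallel_edges n v"
    and "LMAP n v A0 A1 A2 A3"
    and "clockwise4 A0 A1 A2 A3"
    and "i < n" and "j < n"
    and "A3 \<in> edge n v i" and "A1 \<in> edge n v j"
    and "edge_prec n v i j"
  shows "\<exists>k<n. A0 = v k"
proof (rule ccontr)
  assume nv: "\<not> (\<exists>k<n. A0 = v k)"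
  define P where "P = polygon n v"
  define di where "di = v (nxt n i) - v i"
  define dj where "dj = v (nxt n j) - v j"
  have n3: "n \<ge> 3" using assms(1) unfolding convex_polygon_cw_def by simp
  have nxt_lt: "\<And>k. nxt n k < n" using n3 unfolding nxt_def by simp
  have vP: "\<And>k. k < n \<Longrightarrow> v k \<in> P" unfolding P_def polygon_def by (simp add: hull_inc)
  have convP: "convex P" unfolding P_def polygon_def by simp
  have segP: "\<And>a b. a \<in> P \<Longrightarrow> b \<in> P \<Longrightarrow> closed_segment a b \<subseteq> P"
    using convP closed_segment_subset by blast
  have lm: "locally_maximal P A0 A1 A2 A3" and ns: "\<not> slidable n v A0 A1 A2 A3"
    using assms(3) unfolding LMAP_def P_def by auto
  then have pin: "para_in P A0 A1 A2 A3" unfolding locally_maximal_def by auto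
  then have par: "A0 + A2 = A1 + A3" and inP: "A0 \<in> P" "A1 \<in> P" "A2 \<in> P" "A3 \<in> P"
    unfolding para_in_def is_parallelogram_def by auto
  obtain \<delta> where \<delta>: "\<delta> > 0" and loc: "\<And>B0 B1 B2 B3. para_in P B0 B1 B2 B3 \<Longrightarrow>
      dist A0 B0 < \<delta> \<Longrightarrow> dist A1 B1 < \<delta> \<Longrightarrow> dist A2 B2 < \<delta> \<Longrightarrow> dist A3 B3 < \<delta> \<Longrightarrow>
      para_area B0 B1 B2 B3 \<le> para_area A0 A1 A2 A3"
    using lm unfolding locally_maximal_def by blast
  have ij: "i \<noteq> j" using assms(9) unfolding edge_prec_def by simp
  have Z: "cross di dj < 0"
  proof -
    obtain t s where ts: "t \<ge> 1" "v i + t *\<^sub>R di = v j + s *\<^sub>R dj"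
      using assms(9) unfolding edge_prec_def di_def dj_def by blast
    have g0: "cross dj (v i - v j) \<le> 0"
      using halfplane[OF assms(1) assms(6), of "v i"] vP[OF assms(5)] unfolding dj_def P_def by blast
    have e1: "cross dj (v i + t *\<^sub>R di - v j) = cross dj (v i - v j) + t * cross dj di"
      unfolding cross_def by (simp add: algebra_simps)
    have "cross dj (v i + t *\<^sub>R di - v j) = cross dj (s *\<^sub>R dj)" using ts(2) by simp
    also have "\<dots> = 0" unfolding cross_def by simp
    finally have e: "cross dj (v i - v j) + t * cross dj di = 0" using e1 by simp
    have nz: "cross dj di \<noteq> 0"
      using assms(2) assms(5,6) ij unfolding no_parallel_edges_def di_def dj_def by blast
    have "cross dj di > 0"
    proof (rule ccontr)
      assume "\<not> cross dj di > 0"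
      then have "cross dj di < 0" using nz by simp
      then have "t * cross dj di < 0" using ts(1) by (simp add: mult_pos_neg)
      then show False using g0 e by linarith
    qed
    then show ?thesis using cross_anti[of di dj] by simp
  qed
  obtain u1 where u1: "A1 = (1 - u1) *\<^sub>R v j + u1 *\<^sub>R v (nxt n j)"
    using assms(8) unfolding edge_def in_segment by blast
  obtain u3 where u3: "A3 = (1 - u3) *\<^sub>R v i + u3 *\<^sub>R v (nxt n i)"
    using assms(7) unfolding edge_def in_segment by blast
  have A0nv: "A0 \<noteq> v k" if "k < n" for k using nv that by blast
  have Xneg: "cross dj (A0 - v j) < 0"
  proof -
    have hp: "cross dj (A0 - v j) \<le> 0 \<and> (cross dj (A0 - v j) = 0 \<longrightarrow> A0 \<in> closed_segment (v j) (v (nxt n j)))"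
      using halfplane[OF assms(1) assms(6), of A0] inP(1) unfolding dj_def P_def by blast
    have "cross dj (A0 - v j) \<noteq> 0"
    proof
      assume "cross dj (A0 - v j) = 0"
      then have "A0 \<in> closed_segment (v j) (v (nxt n j))" using hp by blast
      then have "A0 \<in> edge n v j" unfolding edge_def open_segment_def
        using A0nv[OF assms(6)] A0nv[OF nxt_lt] by blast
      then have "slidable n v A0 A1 A2 A3"
        using slid_lemma[where k=j and x=A0 and y=A1 and a=0 and b=1] assms(6,8) by simp
      then show False using ns by blast
    qed
    then show ?thesis using hp by linarith
  qed
  have Yneg: "cross di (A0 - v i) < 0"
  proof -
    have hp: "cross di (A0 - v i) \<le> 0 \<and> (cross di (A0 - v i) = 0 \<longrightarrow> A0 \<in> closed_segment (v i) (v (nxt n i)))"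
      using halfplane[OF assms(1) assms(5), of A0] inP(1) unfolding di_def P_def by blast
    have "cross di (A0 - v i) \<noteq> 0"
    proof
      assume "cross di (A0 - v i) = 0"
      then have "A0 \<in> closed_segment (v i) (v (nxt n i))" using hp by blast
      then have "A0 \<in> edge n v i" unfolding edge_def open_segment_def
        using A0nv[OF assms(5)] A0nv[OF nxt_lt] by blast
      then have "slidable n v A0 A1 A2 A3"
        using slid_lemma[where k=i and x=A0 and y=A3 and a=0 and b=3] assms(5,7) by simp
      then show False using ns by blast
    qed
    then show ?thesis using hp by linarith
  qed
  define X where "X = cross (A1 - A0) dj"
  define Y where "Y = cross di (A3 - A0)"
  have X: "X < 0"
  proof -
    have "X = cross dj (A0 - v j)" unfolding X_def u1 dj_def cross_def by (simp add: algebra_simps)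
    then show ?thesis using Xneg by simp
  qed
  have Y: "Y > 0"
  proof -
    have "Y = - cross di (A0 - v i)" unfolding Y_def u3 di_def cross_def by (simp add: algebra_simps)
    then show ?thesis using Yneg by simp
  qed
  define G0 where "G0 = cross (A1 - A0) (A3 - A0)"
  have G0: "G0 < 0"
  proof -
    have "G0 = cross (A0 - A3) (A1 - A0)" unfolding G0_def cross_def by (simp add: algebra_simps)
    then show ?thesis using assms(4) unfolding clockwise4_def by simp
  qed
  have "\<not> A0 extreme_point_of P"
  proof
    assume "A0 extreme_point_of P"
    then have "A0 \<in> v ` {..<n}" using extreme_point_of_convex_hull unfolding P_def polygon_def by blast
    then show False using nv by blast
  qed
  then obtain a b where ab: "a \<in> P" "b \<in> P" "A0 \<in> open_segment a b"
    using inP(1) unfolding extreme_point_of_def by blast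
  define w where "w = b - a"
  have wnz: "w \<noteq> 0" using ab(3) unfolding w_def in_segment by auto
  have cji: "cross dj di \<noteq> 0" and cij: "cross di dj \<noteq> 0" using Z cross_anti[of di dj] by auto
  define p where "p = cross w di / cross dj di"
  define q where "q = cross w dj / cross di dj"
  have wdec: "w = p *\<^sub>R dj + q *\<^sub>R di"
  proof -
    have qq: "q = - cross w dj / cross dj di" unfolding q_def using cross_anti[of di dj] by simp
    have comp: "w $ k = p * dj $ k + q * di $ k" if "k = 1 \<or> k = 2" for k
    proof -
      have "p * dj $ k + q * di $ k = (cross w di * dj $ k - cross w dj * di $ k) / cross dj di"
        unfolding p_def qq using cji by (simp add: field_simps)
      moreover have "cross w di * dj $ k - cross w dj * di $ k = w $ k * cross dj di"
        using that unfolding cross_def by (auto simp: algebra_simps)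
      ultimately show ?thesis using cji by simp
    qed
    have "w $ 1 = (p *\<^sub>R dj + q *\<^sub>R di) $ 1" "w $ 2 = (p *\<^sub>R dj + q *\<^sub>R di) $ 2"
      using comp by auto
    then show ?thesis unfolding vec_eq_iff forall_2 by simp
  qed
  define L where "L = p * X + q * Y"
  define M where "M = p * q * cross di dj"
  have LM: "L \<noteq> 0 \<or> M < 0"
  proof (cases "L = 0")
    case True
    have "p * q > 0"
    proof (cases "p = 0")
      case True
      then have "q * Y = 0" using \<open>L = 0\<close> unfolding L_def by simp
      then have "q = 0" using Y by simp
      then show ?thesis using wnz wdec \<open>p = 0\<close> by simp
    next
      case False
      show ?thesis
      proof (cases "p > 0")
        case True
        then have "p * X < 0" using X by (simp add: mult_pos_neg)
        then have "q * Y > 0" using \<open>L = 0\<close> unfolding L_def by linarith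
        then have "q > 0" using Y by (simp add: zero_less_mult_iff)
        then show ?thesis using True by simp
      next
        case F: False
        then have "p < 0" using False by simp
        then have "p * X > 0" using X by (simp add: mult_neg_neg)
        then have "q * Y < 0" using \<open>L = 0\<close> unfolding L_def by linarith
        then have "q < 0" using Y by (simp add: mult_less_0_iff)
        then show ?thesis using \<open>p < 0\<close> by (simp add: mult_neg_neg)
      qed
    qed
    then have "M < 0" unfolding M_def using Z by (simp add: mult_pos_neg)
    then show ?thesis by simp
  qed simp
  obtain r0 where r0: "r0 > 0" "\<And>\<mu>. \<bar>\<mu>\<bar> < r0 \<Longrightarrow> A0 + \<mu> *\<^sub>R w \<in> closed_segment a b"
    using seg_move[OF ab(3)] unfolding w_def by blast
  obtain r1 where r1: "r1 > 0" "\<And>\<mu>. \<bar>\<mu>\<bar> < r1 \<Longrightarrow> A1 + \<mu> *\<^sub>R dj \<in> closed_segment (v j) (v (nxt n j))"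
    using seg_move[of A1 "v j" "v (nxt n j)"] assms(8) unfolding edge_def dj_def by blast
  obtain r3 where r3: "r3 > 0" "\<And>\<mu>. \<bar>\<mu>\<bar> < r3 \<Longrightarrow> A3 + \<mu> *\<^sub>R di \<in> closed_segment (v i) (v (nxt n i))"
    using seg_move[of A3 "v i" "v (nxt n i)"] assms(7) unfolding edge_def di_def by blast
  obtain \<rho>1 where \<rho>1: "\<rho>1 > 0" "\<And>l. \<bar>l\<bar> < \<rho>1 \<Longrightarrow> \<bar>l * 1\<bar> < r0" using small[OF r0(1)] by blast
  obtain \<rho>2 where \<rho>2: "\<rho>2 > 0" "\<And>l. \<bar>l\<bar> < \<rho>2 \<Longrightarrow> \<bar>l * p\<bar> < r1" using small[OF r1(1)] by blast
  obtain \<rho>3 where \<rho>3: "\<rho>3 > 0" "\<And>l. \<bar>l\<bar> < \<rho>3 \<Longrightarrow> \<bar>l * q\<bar> < r3" using small[OF r3(1)] by blast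
  obtain \<rho>4 where \<rho>4: "\<rho>4 > 0" "\<And>l. \<bar>l\<bar> < \<rho>4 \<Longrightarrow> \<bar>l * norm w\<bar> < \<delta>" using small[OF \<delta>] by blast
  obtain \<rho>5 where \<rho>5: "\<rho>5 > 0" "\<And>l. \<bar>l\<bar> < \<rho>5 \<Longrightarrow> \<bar>l * (p * norm dj)\<bar> < \<delta>" using small[OF \<delta>] by blast
  obtain \<rho>6 where \<rho>6: "\<rho>6 > 0" "\<And>l. \<bar>l\<bar> < \<rho>6 \<Longrightarrow> \<bar>l * (q * norm di)\<bar> < \<delta>" using small[OF \<delta>] by blast
  define \<rho> where "\<rho> = min \<rho>1 (min \<rho>2 (min \<rho>3 (min \<rho>4 (min \<rho>5 \<rho>6))))"
  have \<rho>: "\<rho> > 0" unfolding \<rho>_def using \<rho>1 \<rho>2 \<rho>3 \<rho>4 \<rho>5 \<rho>6 by simp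
  obtain l where l: "\<bar>l\<bar> < \<rho>" "l * L - l^2 * M > 0" using choose[OF LM \<rho>] by blast
  have l1: "\<bar>l\<bar> < \<rho>1" "\<bar>l\<bar> < \<rho>2" "\<bar>l\<bar> < \<rho>3" "\<bar>l\<bar> < \<rho>4" "\<bar>l\<bar> < \<rho>5" "\<bar>l\<bar> < \<rho>6"
    using l(1) unfolding \<rho>_def by auto
  define B0 where "B0 = A0 + l *\<^sub>R w"
  define B1 where "B1 = A1 + (l * p) *\<^sub>R dj"
  define B3 where "B3 = A3 + (l * q) *\<^sub>R di"
  have B0': "B0 = A0 + (l * p) *\<^sub>R dj + (l * q) *\<^sub>R di"
    unfolding B0_def wdec by (simp add: scaleR_add_right)
  have B0P: "B0 \<in> P" using r0(2)[of l] \<rho>1(2)[OF l1(1)] segP[OF ab(1,2)] unfolding B0_def by auto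
  have B1P: "B1 \<in> P" using r1(2)[of "l * p"] \<rho>2(2)[OF l1(2)] segP[OF vP[OF assms(6)] vP[OF nxt_lt]]
    unfolding B1_def by auto
  have B3P: "B3 \<in> P" using r3(2)[of "l * q"] \<rho>3(2)[OF l1(3)] segP[OF vP[OF assms(5)] vP[OF nxt_lt]]
    unfolding B3_def by auto
  have parB: "B0 + A2 = B1 + B3"
  proof -
    have "B0 + A2 = (A0 + A2) + (l * p) *\<^sub>R dj + (l * q) *\<^sub>R di" unfolding B0' by (simp add: algebra_simps)
    also have "\<dots> = B1 + B3" unfolding par B1_def B3_def by (simp add: algebra_simps)
    finally show ?thesis .
  qed
  have pinB: "para_in P B0 B1 A2 B3" unfolding para_in_def is_parallelogram_def
    using parB B0P B1P B3P inP(3) by simp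
  have d0: "dist A0 B0 < \<delta>"
  proof -
    have "dist A0 B0 = \<bar>l * norm w\<bar>" unfolding B0_def dist_norm by (simp add: abs_mult)
    then show ?thesis using \<rho>4(2)[OF l1(4)] by simp
  qed
  have d1: "dist A1 B1 < \<delta>"
  proof -
    have "dist A1 B1 = \<bar>l * (p * norm dj)\<bar>" unfolding B1_def dist_norm by (simp add: abs_mult)
    then show ?thesis using \<rho>5(2)[OF l1(5)] by simp
  qed
  have d3: "dist A3 B3 < \<delta>"
  proof -
    have "dist A3 B3 = \<bar>l * (q * norm di)\<bar>" unfolding B3_def dist_norm by (simp add: abs_mult)
    then show ?thesis using \<rho>6(2)[OF l1(6)] by simp
  qed
  have d2: "dist A2 A2 < \<delta>" using \<delta> by simp
  have le: "para_area B0 B1 A2 B3 \<le> para_area A0 A1 A2 A3" using loc[OF pinB d0 d1 d2 d3] .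
  have e1: "B1 - B0 = (A1 - A0) - (l * q) *\<^sub>R di" unfolding B1_def B0' by (simp add: algebra_simps)
  have e3: "B3 - B0 = (A3 - A0) - (l * p) *\<^sub>R dj" unfolding B3_def B0' by (simp add: algebra_simps)
  have G: "cross (B1 - B0) (B3 - B0) = G0 - (l * L - l^2 * M)"
    unfolding e1 e3 cross_bilin G0_def L_def M_def X_def Y_def
    by (simp add: algebra_simps power2_eq_square)
  have "para_area B0 B1 A2 B3 > para_area A0 A1 A2 A3"
    unfolding para_area_def G G0_def[symmetric] using G0 l(2) by simp
  then show False using le by simp
qed

end
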